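(* Let $D$, $S$, $\nu$, $\alpha_1,\alpha_2,r_1$, $\lambda$, $s$, the families $\mathcal{F}_i$, the points $z_{i,j}$, the functions $\phi_{i,j}$, the coefficients $\beta_{i,j}$ and the functions $g_i$ be as described in the context. For each sufficiently small $\eta > 0$ there are $m, r > 0$ with $0 < \lambda r < r_1$, such that for each $i$, $1 \leq i \leq 2s$, the following hold for the family of balls $\mathcal{F}_i$ (chosen for this $r$) and for the functions $g_i$ (defined with this $m$): (a) If a point $z \in S$ lies in no ball in $\mathcal{F}_i$, then $|g_i(z)| < \eta$. (b) If $z \in \overline{D} \cap \mathbb{B}(z_{i,j}, \lambda r)$ for some $j$, then $|g_i(z) - \beta_{i,j}\phi_{i,j}(z)| < \eta$. (c) If $z \in S \cap \mathbb{B}(z_{i,j}, r)$ for some $j$, then $|\phi_{i,j}(z)| \geq C\eta^{\frac{1}{16}}$, where the constant $C$ is independent of $r$, $m$ and $\eta$. (d) If $z \in \overline{D} \cap b\mathbb{B}(z_{i,j}, \lambda r)$ for some $j$, then $|\phi_{i,j}(z)| < \eta^{\frac{2}{3}}$. Moreover, we can choose $r > 0$ arbitrarily small and make $m > 0$ as large as we want.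
   Context: $D$ is a bounded strictly convex domain with $\mathcal{C}^2$-boundary in $\mathbb{C}^n$, $S = bD$ its boundary, and $\nu(w)$ the outward unit normal to $S$ at $w \in S$. $\langle\cdot,\cdot\rangle$, $\|\cdot\|$, $\mathrm{dist}$ denote the Hermitian inner product, norm and distance in $\mathbb{C}^n$, and $\mathbb{B}(a,r)$ the open ball of radius $r$ centered at $a$. The constants $\alpha_1, \alpha_2, r_1 > 0$ satisfy: $\Re\langle w - z, \nu(w)\rangle \geq \alpha_1\|z-w\|^2$ for all $w \in S$, $z \in \overline{D}$ with $\mathrm{dist}(z, bD) < r_1$, and $\Re\langle w - z, \nu(w)\rangle \leq \alpha_2\|z-w\|^2$ for all $z, w \in S$. Set $\lambda = 4\sqrt{\alpha_2/\alpha_1}$. The positive integer $s$ is such that for each $r > 0$ there are $s$ families of balls $\mathcal{F}_1, \dots, \mathcal{F}_s$, $\mathcal{F}_i = \{\mathbb{B}(z_{i,j}, \lambda r) : 1 \leq j \leq N_i\}$, with centers $z_{i,j} \in S$, such that the balls in each family are pairwise disjoint and $S \subset \bigcup_{i=1}^s\bigcup_{j=1}^{N_i}\mathbb{B}(z_{i,j}, r)$. For $1 \leq i \leq s$, $1\le j\le N_i$, set $z_{i+s,j} = z_{i,j}$ and $\mathcal{F}_{i+s} = \mathcal{F}_i$. For $m > 0$, $1 \leq i \leq 2s$, $1 \leq j \leq N_i$, define $\phi_{i,j}(z) = e^{-m\langle z_{i,j} - z, \nu(z_{i,j})\rangle}$, and for given complex numbers $\beta_{i,j}$ with $|\beta_{i,j}|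 \leq 1$ let $g_i(z) = \sum_{j=1}^{N_i}\beta_{i,j}\phi_{i,j}(z)$ (an entire function). *)

theory Defs
  imports "HOL-Analysis.Analysis"
begin

definition cinner :: "complex^'n \<Rightarrow> complex^'n \<Rightarrow> complex" where
  "cinner a b = (\<Sum>k\<in>UNIV. a$k * cnj (b$k))"

definition C2_on :: "('a::real_normed_vector) set \<Rightarrow> ('a \<Rightarrow> real) \<Rightarrow> bool" where
  "C2_on U \<rho> \<longleftrightarrow> (\<exists>\<rho>1 :: 'a \<Rightarrow> ('a \<Rightarrow>\<^sub>L real). \<exists>\<rho>2 :: 'a \<Rightarrow> ('a \<Rightarrow>\<^sub>L ('a \<Rightarrow>\<^sub>L real)).
      (\<forall>x\<in>U. (\<rho> has_derivative blinfun_apply (\<rho>1 x)) (at x)) \<and>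
      (\<forall>x\<in>U. (\<rho>1 has_derivative blinfun_apply (\<rho>2 x)) (at x)) \<and>
      continuous_on U \<rho>2)"

text \<open>D is a domain with C^2 boundary and nu is its outward unit normal field on the boundary:
  there is a C^2 defining function rho near the boundary, with D = {rho < 0} near bD, nonvanishing
  gradient on bD, and nu w = grad rho(w) / |grad rho(w)|.  (For vectors in C^n the real inner
  product x \<bullet> y equals Re of the Hermitian one, so the real gradient is the right vector.)\<close>
definition C2_boundary_normal :: "(complex^'n) set \<Rightarrow> (complex^'n \<Rightarrow> complex^'n) \<Rightarrow> bool" where
  "C2_boundary_normal D \<nu> \<longleftrightarrow> (\<exists>U \<rho>. open U \<and> frontier D \<subseteq> U \<and> C2_on U \<rho> \<and>
      D \<inter> U = {x\<in>U. \<rho> x < 0} \<and>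
      (\<forall>w\<in>frontier D. \<exists>g. (\<rho> has_derivative (\<lambda>h. g \<bullet> h)) (at w) \<and> g \<noteq> 0 \<and>
          \<nu> w = g /\<^sub>R norm g))"

definition strictly_convex_set :: "(complex^'n) set \<Rightarrow> bool" where
  "strictly_convex_set D \<longleftrightarrow> convex D \<and>
     (\<forall>x\<in>closure D. \<forall>y\<in>closure D. x \<noteq> y \<longrightarrow> open_segment x y \<subseteq> D)"

definition phi :: "(complex^'n \<Rightarrow> complex^'n) \<Rightarrow> real \<Rightarrow> complex^'n \<Rightarrow> complex^'n \<Rightarrow> complex" where
  "phi \<nu> m w z = exp (- complex_of_real m * cinner (w - z) (\<nu> w))"

text \<open>Index convention z_{i+s,j} = z_{i,j}, F_{i+s} = F_i for 1 <= i <= s.\<close>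
definition idx :: "nat \<Rightarrow> nat \<Rightarrow> nat" where
  "idx s i = (if i \<le> s then i else i - s)"

end

theory Submission
  imports Defs
begin

lemma measure_ball_lborel:
  fixes c :: "'a::euclidean_space"
  assumes "r \<ge> 0"
  shows "measure lborel (ball c r) = unit_ball_vol (DIM('a)) * r ^ DIM('a)"
  using assms by (simp add: measure_def emeasure_ball)

lemma packing_card:
  fixes z :: "'a::euclidean_space" and w :: "nat \<Rightarrow> 'a"
  assumes J: "finite J" and rho: "\<rho> > 0" and R: "R \<ge> 0"
    and disj: "\<And>j j'. j \<in> J \<Longrightarrow> j' \<in> J \<Longrightarrow> j \<noteq> j' \<Longrightarrow> ball (w j) \<rho> \<inter> ball (w j') \<rho> = {}"
  shows "real (card {j\<in>J. dist z (w j) < R}) \<le> ((R + \<rho>) / \<rho>) ^ DIM('a)"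
proof -
  define J' where "J' = {j\<in>J. dist z (w j) < R}"
  have fJ': "finite J'" using J by (simp add: J'_def)
  have sub: "(\<Union>j\<in>J'. ball (w j) \<rho>) \<subseteq> ball z (R + \<rho>)"
    by (auto simp: J'_def) (smt (verit) dist_commute dist_triangle)
  have djf: "disjoint_family_on (\<lambda>j. ball (w j) \<rho>) J'"
    using disj by (auto simp: disjoint_family_on_def J'_def)
  have "measure lborel (\<Union>j\<in>J'. ball (w j) \<rho>) = (\<Sum>j\<in>J'. measure lborel (ball (w j) \<rho>))"
    by (rule measure_finite_Union[OF fJ']) (use rho in \<open>auto simp: djf emeasure_ball\<close>)
  also have "\<dots> = real (card J') * (unit_ball_vol (DIM('a)) * \<rho> ^ DIM('a))"
    using rho by (simp add: measure_ball_lborel)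
  finally have eq: "measure lborel (\<Union>j\<in>J'. ball (w j) \<rho>) = real (card J') * (unit_ball_vol (DIM('a)) * \<rho> ^ DIM('a))" .
  have "measure lborel (\<Union>j\<in>J'. ball (w j) \<rho>) \<le> measure lborel (ball z (R + \<rho>))"
    by (rule measure_mono_fmeasurable[OF sub]) (use rho R in \<open>auto simp: fmeasurable_def emeasure_ball\<close>)
  also have "\<dots> = unit_ball_vol (DIM('a)) * (R + \<rho>) ^ DIM('a)"
    using rho R by (simp add: measure_ball_lborel)
  finally have "real (card J') * (unit_ball_vol (DIM('a)) * \<rho> ^ DIM('a)) \<le> unit_ball_vol (DIM('a)) * (R + \<rho>) ^ DIM('a)"
    using eq by simp
  hence "real (card J') * \<rho> ^ DIM('a) \<le> (R + \<rho>) ^ DIM('a)"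
    by (simp add: mult.assoc[symmetric] mult.commute[of _ "unit_ball_vol _"])
  thus ?thesis using rho by (simp add: J'_def power_divide pos_le_divide_eq)
qed

lemma le_pow3: "k \<ge> 1 \<Longrightarrow> real k + 2 \<le> 3 ^ k"
proof (induction k rule: dec_induct)
  case base then show ?case by simp
next
  case (step n) then show ?case by simp
qed

lemma geom_quarter:
  fixes K :: "nat set"
  assumes "finite K" "0 \<notin> K"
  shows "(\<Sum>k\<in>K. (1/4::real) ^ k) \<le> 1/3"
proof -
  define g where "g k = (if k = 0 then 0 else (1/4::real) ^ k)" for k
  have "(\<lambda>n. (1/4::real) ^ n) sums (1 / (1 - 1/4))" by (rule geometric_sums) simp
  hence "(\<lambda>n. (1/4) * (1/4::real) ^ n) sums ((1/4) * (1 / (1 - 1/4)))" by (rule sums_mult)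
  hence "(\<lambda>n. g (Suc n)) sums (1/3)" by (simp add: g_def)
  hence gs: "g sums (1/3)" using sums_Suc_iff[of g "1/3"] by (simp add: g_def)
  have "(\<Sum>k\<in>K. (1/4::real) ^ k) = sum g K" 
  proof (rule sum.cong)
    fix k assume "k \<in> K"
    then have "k \<noteq> 0" using assms(2) by metis
    then show "(1/4::real) ^ k = g k" by (simp add: g_def)
  qed simp
  also have "\<dots> \<le> suminf g" by (rule sum_le_suminf) (use gs assms in \<open>auto simp: sums_iff g_def\<close>)
  also have "\<dots> = 1/3" using gs by (simp add: sums_iff)
  finally show ?thesis .
qed


lemma sq_ge: "(1::real) \<le> x \<Longrightarrow> x \<le> x^2"
proof -
  assume "1 \<le> x"
  then have "x * 1 \<le> x * x" by (intro mult_left_mono) auto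
  then show ?thesis by (simp add: power2_eq_square)
qed

lemma sum_bound:
  fixes z :: "'a::euclidean_space" and w :: "nat \<Rightarrow> 'a" and f :: "nat \<Rightarrow> real"
  assumes J: "finite J" and rho: "\<rho> > 0"
    and disj: "\<And>j j'. j \<in> J \<Longrightarrow> j' \<in> J \<Longrightarrow> j \<noteq> j' \<Longrightarrow> ball (w j) \<rho> \<inter> ball (w j') \<rho> = {}"
    and far: "\<And>j. j \<in> J \<Longrightarrow> \<rho> \<le> dist z (w j)"
    and eta: "0 < \<eta>" "\<eta> \<le> 1"
    and a: "a = 1 / (4 * 3 ^ DIM('a))"
    and f: "\<And>j. j \<in> J \<Longrightarrow> f j \<le> (a * \<eta>) powr ((dist z (w j) / \<rho>)^2)"
  shows "sum f J \<le> \<eta> / 3"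
proof -
  define k where "k j = nat \<lfloor>dist z (w j) / \<rho>\<rfloor>" for j
  have p1: "(1::real) \<le> 3 ^ DIM('a)" by simp
  have apos: "0 < a" "a < 1" unfolding a using p1 by (simp, smt (verit) divide_less_eq_1_pos)
  define q where "q = a * \<eta>"
  have aeta: "a * \<eta> \<le> a" using apos eta by (intro mult_left_le) auto
  have q: "0 < q" "q < 1" using apos eta unfolding q_def by simp_all (use aeta apos in linarith)
  have u1: "1 \<le> dist z (w j) / \<rho>" if "j \<in> J" for j using far[OF that] rho by simp
  have kk: "real (k j) = of_int \<lfloor>dist z (w j) / \<rho>\<rfloor>" if "j \<in> J" for j
    using u1[OF that] by (simp add: k_def)
  have k1: "1 \<le> k j" if "j \<in> J" for j
  proof -
    have "(1::real) \<le> of_int \<lfloor>dist z (w j) / \<rho>\<rfloor>" using u1[OF that] by simp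
    then have "(1::real) \<le> real (k j)" using kk[OF that] by simp
    then show ?thesis by simp
  qed
  have kle: "real (k j) \<le> dist z (w j) / \<rho>" if "j \<in> J" for j
    using kk[OF that] by simp
  have klt: "dist z (w j) < (real (k j) + 1) * \<rho>" if "j \<in> J" for j
  proof -
    have "dist z (w j) / \<rho> < real (k j) + 1" using u1[OF that] unfolding kk[OF that]
      using real_of_int_floor_add_one_gt[of "dist z (w j) / \<rho>"] by simp
    thus ?thesis using rho by (simp add: divide_less_eq)
  qed
  have fj: "f j \<le> \<eta> * a ^ k j" if "j \<in> J" for j
  proof -
    have "f j \<le> q powr ((dist z (w j) / \<rho>)^2)" using f[OF that] by (simp add: q_def)
    also have "\<dots> \<le> q powr (real (k j))"
    proof (rule powr_mono')
      have "real (k j) \<le> dist z (w j) / \<rho>" by (rule kle[OF that])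
      also have "\<dots> \<le> (dist z (w j) / \<rho>)^2" using u1[OF that] sq_ge by blast
      finally show "real (k j) \<le> (dist z (w j) / \<rho>)^2" .
    qed (use q in auto)
    also have "\<dots> = q ^ k j" using q by (simp add: powr_realpow)
    also have "\<dots> = a ^ k j * \<eta> ^ k j" by (simp add: q_def power_mult_distrib)
    also have "\<dots> \<le> a ^ k j * \<eta>"
      using eta apos k1[OF that] by (intro mult_left_mono) (auto simp: power_le_one_iff intro: power_decreasing[of 1 "k j", simplified])
    finally show ?thesis by (simp add: mult.commute)
  qed
  have "sum f J \<le> (\<Sum>j\<in>J. \<eta> * a ^ k j)" using fj by (rule sum_mono)
  also have "\<dots> = \<eta> * (\<Sum>j\<in>J. a ^ k j)" by (simp add: sum_distrib_left)
  also have "(\<Sum>j\<in>J. a ^ k j) = (\<Sum>n\<in>k ` J. \<Sum>j\<in>{j\<in>J. k j = n}. a ^ k j)"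
    by (rule sum.image_gen[OF J])
  also have "\<dots> = (\<Sum>n\<in>k ` J. real (card {j\<in>J. k j = n}) * a ^ n)"
    by (intro sum.cong refl) simp
  also have "\<dots> \<le> (\<Sum>n\<in>k ` J. (1/4::real) ^ n)"
  proof (intro sum_mono)
    fix n assume n: "n \<in> k ` J"
    then have n1: "1 \<le> n" using k1 by auto
    have "card {j\<in>J. k j = n} \<le> card {j\<in>J. dist z (w j) < (real n + 1) * \<rho>}"
      using J klt by (intro card_mono) auto
    moreover have "real (card {j\<in>J. dist z (w j) < (real n + 1) * \<rho>}) \<le> (((real n + 1) * \<rho> + \<rho>) / \<rho>) ^ DIM('a)"
      by (rule packing_card[OF J rho]) (use rho disj in auto)
    ultimately have "real (card {j\<in>J. k j = n}) \<le> (((real n + 1) * \<rho> + \<rho>) / \<rho>) ^ DIM('a)"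
      by (meson of_nat_le_iff order_trans)
    also have "((real n + 1) * \<rho> + \<rho>) / \<rho> = real n + 2" using rho by (simp add: field_simps)
    also have "(real n + 2) ^ DIM('a) \<le> (3 ^ n) ^ DIM('a)"
      using le_pow3[OF n1] by (intro power_mono) auto
    finally have c: "real (card {j\<in>J. k j = n}) \<le> (3 ^ n) ^ DIM('a)" .
    have "real (card {j\<in>J. k j = n}) * a ^ n \<le> (3 ^ n) ^ DIM('a) * a ^ n"
      using c apos by (intro mult_right_mono) auto
    also have "(3 ^ n) ^ DIM('a) * a ^ n = (a * 3 ^ DIM('a)) ^ n"
      by (metis power_mult power_mult_distrib mult.commute)
    also have "a * 3 ^ DIM('a) = 1/4" using a by simp
    finally show "real (card {j\<in>J. k j = n}) * a ^ n \<le> (1/4) ^ n" .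
  qed
  also have "\<dots> \<le> 1/3"
    using J k1 by (intro geom_quarter) force+
  finally show ?thesis using eta by (simp add: mult_left_mono)
qed


lemma norm_phi: "norm (phi \<nu> m w z) = exp (- m * Re (cinner (w - z) (\<nu> w)))"
  by (simp add: phi_def norm_exp_eq_Re)

lemma phi_upper:
  assumes "Re (cinner (w - z) (\<nu> w)) \<ge> \<alpha>1 * (norm (z - w))^2" "m \<ge> 0"
  shows "norm (phi \<nu> m w z) \<le> exp (- m * (\<alpha>1 * (norm (z - w))^2))"
  unfolding norm_phi using assms by (simp add: mult_left_mono)

lemma phi_lower:
  assumes "Re (cinner (w - z) (\<nu> w)) \<le> \<alpha>2 * (norm (z - w))^2" "m \<ge> 0"
  shows "norm (phi \<nu> m w z) \<ge> exp (- m * (\<alpha>2 * (norm (z - w))^2))"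
  unfolding norm_phi using assms by (simp add: mult_left_mono)

theorem lemma2p3:
  fixes D :: "(complex^'n) set"
    and \<nu> :: "complex^'n \<Rightarrow> complex^'n"
    and \<alpha>1 \<alpha>2 r1 lam :: real
    and s :: nat
    and zc :: "real \<Rightarrow> nat \<Rightarrow> nat \<Rightarrow> complex^'n"
    and N :: "real \<Rightarrow> nat \<Rightarrow> nat"
  assumes D_domain: "open D" "connected D" "D \<noteq> {}" "bounded D"
    and D_sconv: "strictly_convex_set D"
    and D_C2: "C2_boundary_normal D \<nu>"
    and consts_pos: "\<alpha>1 > 0" "\<alpha>2 > 0" "r1 > 0"
    and alpha1: "\<And>w z. w \<in> frontier D \<Longrightarrow> z \<in> closure D \<Longrightarrow> infdist z (frontier D) < r1 \<Longrightarrow>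
                   Re (cinner (w - z) (\<nu> w)) \<ge> \<alpha>1 * (norm (z - w))^2"
    and alpha2: "\<And>w z. w \<in> frontier D \<Longrightarrow> z \<in> frontier D \<Longrightarrow>
                   Re (cinner (w - z) (\<nu> w)) \<le> \<alpha>2 * (norm (z - w))^2"
    and lam_def: "lam = 4 * sqrt (\<alpha>2 / \<alpha>1)"
    and s_pos: "s > 0"
    and centers: "\<And>r i j. r > 0 \<Longrightarrow> i \<in> {1..s} \<Longrightarrow> j \<in> {1..N r i} \<Longrightarrow> zc r i j \<in> frontier D"
    and disjoint: "\<And>r i j j'. r > 0 \<Longrightarrow> i \<in> {1..s} \<Longrightarrow> j \<in> {1..N r i} \<Longrightarrow> j' \<in> {1..N r i} \<Longrightarrow>
                    j \<noteq> j' \<Longrightarrow> ball (zc r i j) (lam * r) \<inter> ball (zc r i j') (lam * r) = {}"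
    and cover: "\<And>r. r > 0 \<Longrightarrow> frontier D \<subseteq> (\<Union>i\<in>{1..s}. \<Union>j\<in>{1..N r i}. ball (zc r i j) r)"
  shows "\<exists>C>0. \<exists>\<eta>0>0. \<forall>\<eta>. 0 < \<eta> \<and> \<eta> < \<eta>0 \<longrightarrow>
     (\<forall>r0>0. \<forall>M. \<exists>m r. m > M \<and> 0 < r \<and> r < r0 \<and> 0 < lam * r \<and> lam * r < r1 \<and>
       (\<forall>\<beta> :: nat \<Rightarrow> nat \<Rightarrow> complex. (\<forall>i j. norm (\<beta> i j) \<le> 1) \<longrightarrow>
         (\<forall>i\<in>{1 .. 2 * s}.
           (let Ni = N r (idx s i); zz = zc r (idx s i);
                g = (\<lambda>z. \<Sum>j\<in>{1..Ni}. \<beta> i j * phi \<nu> m (zz j) z) in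
            (\<forall>z\<in>frontier D. (\<forall>j\<in>{1..Ni}. z \<notin> ball (zz j) (lam * r)) \<longrightarrow> norm (g z) < \<eta>) \<and>
            (\<forall>j\<in>{1..Ni}. \<forall>z\<in>closure D \<inter> ball (zz j) (lam * r).
                norm (g z - \<beta> i j * phi \<nu> m (zz j) z) < \<eta>) \<and>
            (\<forall>j\<in>{1..Ni}. \<forall>z\<in>frontier D \<inter> ball (zz j) r.
                norm (phi \<nu> m (zz j) z) \<ge> C * \<eta> powr (1/16)) \<and>
            (\<forall>j\<in>{1..Ni}. \<forall>z\<in>closure D \<inter> sphere (zz j) (lam * r).
                norm (phi \<nu> m (zz j) z) < \<eta> powr (2/3))))))"
  proof -
  define d where "d = DIM(complex^'n)"
  define a :: real where "a = 1 / (4 * 3 ^ d)"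
  have p1: "(1::real) \<le> 3 ^ d" by simp
  have apos: "0 < a" "a < 1" unfolding a_def using p1 by (simp, smt (verit) divide_less_eq_1_pos)
  define C where "C = a powr (1/16)"
  have Cpos: "C > 0" using apos by (simp add: C_def)
  have lampos: "lam > 0" using consts_pos by (simp add: lam_def)
  have lam2: "lam^2 = 16 * (\<alpha>2 / \<alpha>1)" using consts_pos by (simp add: lam_def power_mult_distrib)
  have fr_cl: "frontier D \<subseteq> closure D" by (simp add: frontier_def)
  show ?thesis
  proof (rule exI[of _ C], intro conjI Cpos, rule exI[of _ "1::real"], intro conjI zero_less_one allI impI)
    fix \<eta> :: real and r0 :: real and M :: real
    assume eta: "0 < \<eta> \<and> \<eta> < 1" and r0: "r0 > 0"
    define q where "q = a * \<eta>"
    have aeta: "a * \<eta> \<le> a" using apos eta by (intro mult_left_le) auto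
    have q: "0 < q" "q < 1" using apos eta unfolding q_def by simp_all (use aeta apos in linarith)
    define t where "t = - ln q / 16"
    have tpos: "t > 0" using q by (simp add: t_def)
    have et16: "exp (- (16 * t)) = q" using q by (simp add: t_def)
    define r where "r = min (r0/2) (min (r1/(2*lam)) (sqrt (t/(\<alpha>2*(\<bar>M\<bar>+1)))))"
    have rpos: "r > 0" using r0 consts_pos lampos tpos by (simp add: r_def)
    define m where "m = t / (\<alpha>2 * r^2)"
    have mpos: "m > 0" using tpos rpos consts_pos by (simp add: m_def)
    have "r \<le> sqrt (t/(\<alpha>2*(\<bar>M\<bar>+1)))" by (simp add: r_def)
    hence "r^2 \<le> t/(\<alpha>2*(\<bar>M\<bar>+1))" using rpos
      by (metis less_eq_real_def power_mono real_sqrt_pow2 real_sqrt_ge_0_iff tpos consts_pos(2)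
          divide_nonneg_pos mult_pos_pos abs_ge_zero add_nonneg_pos zero_less_one)
    hence "r^2 * (\<alpha>2*(\<bar>M\<bar>+1)) \<le> t" using consts_pos by (simp add: le_divide_eq)
    hence "\<bar>M\<bar>+1 \<le> m" using consts_pos rpos unfolding m_def by (simp add: le_divide_eq algebra_simps)
    hence mM: "m > M" by linarith
    have rr0: "r < r0" using r0 by (simp add: r_def)
    have lr1: "lam * r < r1"
    proof -
      have "r \<le> r1/(2*lam)" by (simp add: r_def)
      hence "lam * r \<le> r1/2" using lampos by (simp add: le_divide_eq mult_ac)
      thus ?thesis using consts_pos by linarith
    qed
    have lrpos: "lam * r > 0" using lampos rpos by simp
    have key16: "m * \<alpha>1 * (lam * r)^2 = 16 * t"
      using consts_pos rpos unfolding m_def power_mult_distrib lam2 by (simp add: field_simps)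
    have upper: "norm (phi \<nu> m w z) \<le> q powr ((dist z w / (lam * r))^2)"
      if w: "w \<in> frontier D" and z: "z \<in> closure D" and idz: "infdist z (frontier D) < r1" for w z
    proof -
      have "norm (phi \<nu> m w z) \<le> exp (- m * (\<alpha>1 * (norm (z - w))^2))"
        by (rule phi_upper[where \<nu>=\<nu> and w=w and z=z, OF alpha1[OF w z idz]]) (use mpos in simp)
      also have "- m * (\<alpha>1 * (norm (z - w))^2) = ((dist z w / (lam * r))^2) * ln q"
      proof -
        have "ln q = - (m * \<alpha>1 * (lam * r)^2)" using key16 by (simp add: t_def)
        thus ?thesis using lrpos lampos rpos by (simp add: dist_norm power_divide field_simps)
      qed
      also have "exp \<dots> = q powr ((dist z w / (lam * r))^2)" using q by (simp add: powr_def)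
      finally show ?thesis .
    qed
    show "\<exists>m r. m > M \<and> 0 < r \<and> r < r0 \<and> 0 < lam * r \<and> lam * r < r1 \<and>
       (\<forall>\<beta> :: nat \<Rightarrow> nat \<Rightarrow> complex. (\<forall>i j. norm (\<beta> i j) \<le> 1) \<longrightarrow>
         (\<forall>i\<in>{1 .. 2 * s}.
           (let Ni = N r (idx s i); zz = zc r (idx s i);
                g = (\<lambda>z. \<Sum>j\<in>{1..Ni}. \<beta> i j * phi \<nu> m (zz j) z) in
            (\<forall>z\<in>frontier D. (\<forall>j\<in>{1..Ni}. z \<notin> ball (zz j) (lam * r)) \<longrightarrow> norm (g z) < \<eta>) \<and>
            (\<forall>j\<in>{1..Ni}. \<forall>z\<in>closure D \<inter> ball (zz j) (lam * r).
                norm (g z - \<beta> i j * phi \<nu> m (zz j) z) < \<eta>) \<and>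
            (\<forall>j\<in>{1..Ni}. \<forall>z\<in>frontier D \<inter> ball (zz j) r.
                norm (phi \<nu> m (zz j) z) \<ge> C * \<eta> powr (1/16)) \<and>
            (\<forall>j\<in>{1..Ni}. \<forall>z\<in>closure D \<inter> sphere (zz j) (lam * r).
                norm (phi \<nu> m (zz j) z) < \<eta> powr (2/3)))))"
    proof (rule exI[of _ m], rule exI[of _ r], intro conjI mM rpos rr0 lrpos lr1 allI impI ballI)
      fix \<beta> :: "nat \<Rightarrow> nat \<Rightarrow> complex" and i
      assume beta: "\<forall>i j. norm (\<beta> i j) \<le> 1" and i: "i \<in> {1 .. 2 * s}"
      define ii where "ii = idx s i"
      have ii: "ii \<in> {1..s}" using i s_pos by (auto simp: ii_def idx_def)
      define Ni where "Ni = N r ii"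
      define zz where "zz = zc r ii"
      have zzS: "zz j \<in> frontier D" if "j \<in> {1..Ni}" for j
        using centers[OF rpos ii] that by (simp add: zz_def Ni_def)
      have zzdisj: "ball (zz j) (lam * r) \<inter> ball (zz j') (lam * r) = {}"
        if "j \<in> {1..Ni}" "j' \<in> {1..Ni}" "j \<noteq> j'" for j j'
        using disjoint[OF rpos ii] that by (simp add: zz_def Ni_def)
      have sumest: "(\<Sum>j\<in>J. norm (\<beta> i j * phi \<nu> m (zz j) z)) < \<eta>"
        if J: "J \<subseteq> {1..Ni}" and z: "z \<in> closure D" and idz: "infdist z (frontier D) < r1"
          and far: "\<And>j. j \<in> J \<Longrightarrow> lam * r \<le> dist z (zz j)" for J z
      proof -
        have fJ: "finite J" using J finite_subset by blast
        have "(\<Sum>j\<in>J. norm (\<beta> i j * phi \<nu> m (zz j) z)) \<le> \<eta> / 3"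
        proof (rule sum_bound[OF fJ lrpos, where w = zz and z = z and a = a])
          show "\<And>j j'. j \<in> J \<Longrightarrow> j' \<in> J \<Longrightarrow> j \<noteq> j' \<Longrightarrow> ball (zz j) (lam * r) \<inter> ball (zz j') (lam * r) = {}"
            using zzdisj J by blast
          show "\<And>j. j \<in> J \<Longrightarrow> lam * r \<le> dist z (zz j)" by (rule far)
          show "0 < \<eta>" "\<eta> \<le> 1" using eta by auto
          show "a = 1 / (4 * 3 ^ DIM(complex^'n))" by (simp add: a_def d_def)
          fix j assume j: "j \<in> J"
          have "norm (\<beta> i j * phi \<nu> m (zz j) z) \<le> norm (phi \<nu> m (zz j) z)"
            using beta by (simp add: norm_mult mult_left_le_one_le)
          also have "\<dots> \<le> q powr ((dist z (zz j) / (lam * r))^2)"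
            by (rule upper[OF zzS z idz]) (use j J in auto)
          finally show "norm (\<beta> i j * phi \<nu> m (zz j) z) \<le> (a * \<eta>) powr ((dist z (zz j) / (lam * r))^2)"
            by (simp add: q_def)
        qed
        thus ?thesis using eta by linarith
      qed
      let ?g = "\<lambda>z. \<Sum>j\<in>{1..Ni}. \<beta> i j * phi \<nu> m (zz j) z"
      have A: "\<forall>z\<in>frontier D. (\<forall>j\<in>{1..Ni}. z \<notin> ball (zz j) (lam * r)) \<longrightarrow> norm (?g z) < \<eta>"
      proof (intro ballI impI)
        fix z assume z: "z \<in> frontier D" and nb: "\<forall>j\<in>{1..Ni}. z \<notin> ball (zz j) (lam * r)"
        have "norm (?g z) \<le> (\<Sum>j\<in>{1..Ni}. norm (\<beta> i j * phi \<nu> m (zz j) z))" by (rule norm_sum)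
        also have "\<dots> < \<eta>"
        proof (rule sumest[OF order_refl])
          show "z \<in> closure D" using z fr_cl by blast
          show "infdist z (frontier D) < r1" using z consts_pos by simp
          show "\<And>j. j \<in> {1..Ni} \<Longrightarrow> lam * r \<le> dist z (zz j)"
            using nb by (auto simp: dist_commute not_less)
        qed
        finally show "norm (?g z) < \<eta>" .
      qed
      have B: "\<forall>j\<in>{1..Ni}. \<forall>z\<in>closure D \<inter> ball (zz j) (lam * r).
                norm (?g z - \<beta> i j * phi \<nu> m (zz j) z) < \<eta>"
      proof (intro ballI)
        fix j z assume j: "j \<in> {1..Ni}" and z: "z \<in> closure D \<inter> ball (zz j) (lam * r)"
        have "?g z - \<beta> i j * phi \<nu> m (zz j) z = (\<Sum>j'\<in>{1..Ni} - {j}. \<beta> i j' * phi \<nu> m (zz j') z)"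
          using j by (simp add: sum.remove)
        hence "norm (?g z - \<beta> i j * phi \<nu> m (zz j) z) \<le> (\<Sum>j'\<in>{1..Ni} - {j}. norm (\<beta> i j' * phi \<nu> m (zz j') z))"
          by (simp add: norm_sum)
        also have "\<dots> < \<eta>"
        proof (rule sumest)
          show "{1..Ni} - {j} \<subseteq> {1..Ni}" by blast
          show "z \<in> closure D" using z by blast
          have "infdist z (frontier D) \<le> dist z (zz j)" by (rule infdist_le[OF zzS[OF j]])
          also have "\<dots> < lam * r" using z by (simp add: dist_commute)
          finally show "infdist z (frontier D) < r1" using lr1 by linarith
          fix j' assume j': "j' \<in> {1..Ni} - {j}"
          have "z \<notin> ball (zz j') (lam * r)" using zzdisj[OF j _, of j'] j' z by auto
          thus "lam * r \<le> dist z (zz j')" by (simp add: dist_commute not_less)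
        qed
        finally show "norm (?g z - \<beta> i j * phi \<nu> m (zz j) z) < \<eta>" .
      qed
      have Cc: "\<forall>j\<in>{1..Ni}. \<forall>z\<in>frontier D \<inter> ball (zz j) r. norm (phi \<nu> m (zz j) z) \<ge> C * \<eta> powr (1/16)"
      proof (intro ballI)
        fix j z assume j: "j \<in> {1..Ni}" and z: "z \<in> frontier D \<inter> ball (zz j) r"
        have nz: "norm (z - zz j) < r" using z by (simp add: dist_norm norm_minus_commute)
        have "C * \<eta> powr (1/16) = q powr (1/16)" using apos eta by (simp add: C_def q_def powr_mult)
        also have "\<dots> = exp (- t)" using q by (simp add: powr_def t_def)
        also have "\<dots> = exp (- m * (\<alpha>2 * r^2))" using consts_pos rpos by (simp add: m_def)
        also have "\<dots> \<le> exp (- m * (\<alpha>2 * (norm (z - zz j))^2))"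
          using mpos consts_pos nz by (simp add: power_strict_mono less_imp_le mult_left_mono)
        also have "\<dots> \<le> norm (phi \<nu> m (zz j) z)"
          by (rule phi_lower[where \<nu>=\<nu> and w="zz j" and z=z, OF alpha2[OF zzS[OF j]]]) (use z mpos in auto)
        finally show "norm (phi \<nu> m (zz j) z) \<ge> C * \<eta> powr (1/16)" .
      qed
      have Dd: "\<forall>j\<in>{1..Ni}. \<forall>z\<in>closure D \<inter> sphere (zz j) (lam * r). norm (phi \<nu> m (zz j) z) < \<eta> powr (2/3)"
      proof (intro ballI)
        fix j z assume j: "j \<in> {1..Ni}" and z: "z \<in> closure D \<inter> sphere (zz j) (lam * r)"
        have dz: "dist z (zz j) = lam * r" using z by (simp add: dist_commute)
        have idz: "infdist z (frontier D) < r1"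
          using infdist_le[OF zzS[OF j], of z] dz lr1 by linarith
        have "norm (phi \<nu> m (zz j) z) \<le> q powr ((dist z (zz j) / (lam * r))^2)"
          using upper[OF zzS[OF j] _ idz] z by blast
        also have "\<dots> = q" using dz lampos rpos q by simp
        also have "\<dots> < \<eta>" using q_def apos eta by (simp add: mult_less_cancel_right1) 
        also have "\<eta> = \<eta> powr 1" using eta by simp
        also have "\<dots> \<le> \<eta> powr (2/3)" using eta by (intro powr_mono') auto
        finally show "norm (phi \<nu> m (zz j) z) < \<eta> powr (2/3)" .
      qed
      show "let Ni = N r (idx s i); zz = zc r (idx s i);
                g = (\<lambda>z. \<Sum>j\<in>{1..Ni}. \<beta> i j * phi \<nu> m (zz j) z) in
            (\<forall>z\<in>frontier D. (\<forall>j\<in>{1..Ni}. z \<notin> ball (zz j) (lam * r)) \<longrightarrow> norm (g z) < \<eta>) \<and>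
            (\<forall>j\<in>{1..Ni}. \<forall>z\<in>closure D \<inter> ball (zz j) (lam * r).
                norm (g z - \<beta> i j * phi \<nu> m (zz j) z) < \<eta>) \<and>
            (\<forall>j\<in>{1..Ni}. \<forall>z\<in>frontier D \<inter> ball (zz j) r.
                norm (phi \<nu> m (zz j) z) \<ge> C * \<eta> powr (1/16)) \<and>
            (\<forall>j\<in>{1..Ni}. \<forall>z\<in>closure D \<inter> sphere (zz j) (lam * r).
                norm (phi \<nu> m (zz j) z) < \<eta> powr (2/3))"
        using A B Cc Dd unfolding Let_def Ni_def zz_def ii_def by blast
    qed
  qed
qed

end
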